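(* Fix $z\in\{0,1\}$ and let $(\hat w^{*+}_{z,ij})_{ij:Z_{ij}=z}$ be the solution of the program (P): minimize $\sum_{ij:Z_{ij}=z}\psi(w_{ij})$ subject to $\bigl|\sum_{ij:Z_{ij}=z}w_{ij}B_k(X_{ij})-B^*_k\bigr|\le\delta_k$ for $k=1,\dots,K$ and $w_{ij}\ge0$ for all $ij$ with $Z_{ij}=z$. Let $R=\{ij: Z_{ij}=z,\ \hat w^{*+}_{z,ij}\neq0\}$ be the set of units receiving non-zero weight. Consider the relaxed program (P$_R$) over the units in $R$ only and without the non-negativity constraint: minimize $\sum_{ij\in R}\psi(w_{ij})$ subject to $\bigl|\sum_{ij\in R}w_{ij}B_k(X_{ij})-B^*_k\bigr|\le\delta_k$ for $k=1,\dots,K$. Then solving (P) is equivalent to the two-step procedure (I) restrict to $R$, discarding all other units; (II) solve (P$_R$): the solution of (P$_R$), extended by zero outside $R$, coincides with the solution $\hat w^{*+}_{z}$ of (P).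
   Context: There are $m$ studies with $n=\sum_i n_i$ individuals in total; individual $ij$ has binary treatment $Z_{ij}$ and covariates $X_{ij}\in\mathbb{R}^p$; all sums over $ij$ are over these study individuals. $B=(B_1,\dots,B_K)^\top$ are basis functions of the covariates with $B_1\equiv1$; $B^*=(B^*_1,\dots,B^*_K)^\top\in\mathbb{R}^K$ is a target covariate profile with $B^*_1=1$; $\delta=(\delta_1,\dots,\delta_K)$ are tolerances with $\delta_k\ge0$ and $\delta_1=0$ (so the first constraint enforces $\sum w_{ij}=1$). $\psi:\mathbb{R}\to\mathbb{R}$ is a convex dispersion function (differentiable, with $\psi'$ invertible). *)

theory Defs
  imports "HOL-Analysis.Analysis"
begin

definition balance_ok ::
  "'u set \<Rightarrow> nat \<Rightarrow> (nat \<Rightarrow> 'x \<Rightarrow> real) \<Rightarrow> ('u \<Rightarrow> 'x) \<Rightarrow> (nat \<Rightarrow> real)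
     \<Rightarrow> (nat \<Rightarrow> real) \<Rightarrow> ('u \<Rightarrow> real) \<Rightarrow> bool" where
  "balance_ok A K B X Bstar \<delta> w \<longleftrightarrow>
     (\<forall>k\<in>{1..K}. \<bar>(\<Sum>u\<in>A. w u * B k (X u)) - Bstar k\<bar> \<le> \<delta> k)"

definition is_minimizer :: "(('u \<Rightarrow> real) \<Rightarrow> bool) \<Rightarrow> (('u \<Rightarrow> real) \<Rightarrow> real) \<Rightarrow> ('u \<Rightarrow> real) \<Rightarrow> bool" where
  "is_minimizer F obj w \<longleftrightarrow> F w \<and> (\<forall>v. F v \<longrightarrow> obj w \<le> obj v)"

end

theory Submission
  imports Defs
begin


lemma strict_mid_lt:
  fixes \<psi> :: "real \<Rightarrow> real"
  assumes cv: "convex_on UNIV \<psi>" and d: "\<forall>x. \<psi> differentiable (at x)"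
    and inj: "inj (deriv \<psi>)" and ab: "a < b"
  shows "\<psi> ((a+b)/2) < (\<psi> a + \<psi> b)/2"
proof -
  define c where "c = (a+b)/2"
  have le: "\<psi> c \<le> (\<psi> a + \<psi> b)/2"
    using convex_onD[OF cv, of "1/2" a b] by (simp add: c_def field_simps)
  have D: "\<And>x. DERIV \<psi> x :> deriv \<psi> x" using d DERIV_deriv_iff_real_differentiable by blast
  have ac: "a < c" and cb: "c < b" using ab by (auto simp: c_def)
  obtain x1 where x1: "a < x1" "x1 < c" "\<psi> c - \<psi> a = (c - a) * deriv \<psi> x1"
    using MVT2[OF ac D] by blast
  obtain x2 where x2: "c < x2" "x2 < b" "\<psi> b - \<psi> c = (b - c) * deriv \<psi> x2"
    using MVT2[OF cb D] by blast
  show ?thesis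
  proof (rule ccontr)
    assume "\<not> ?thesis"
    hence eq: "\<psi> c - \<psi> a = \<psi> b - \<psi> c" using le by (simp add: c_def)
    have e1: "c - a = b - c" and e2: "c - a > 0" using ab by (auto simp: c_def field_simps)
    have "(c - a) * deriv \<psi> x1 = (c - a) * deriv \<psi> x2"
      by (metis eq x1(3) x2(3) e1)
    hence "deriv \<psi> x1 = deriv \<psi> x2" using e2 by simp
    hence "x1 = x2" using inj by (simp add: inj_def)
    thus False using x1 x2 by simp
  qed
qed

lemma abs_conv_le:
  fixes a b d t :: real
  assumes "\<bar>a\<bar> \<le> d" "\<bar>b\<bar> \<le> d" "0 \<le> t" "t \<le> 1"
  shows "\<bar>t * a + (1-t) * b\<bar> \<le> d"
proof -
  have "\<bar>t * a + (1-t) * b\<bar> \<le> \<bar>t * a\<bar> + \<bar>(1-t) * b\<bar>" by (rule abs_triangle_ineq)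
  also have "\<dots> = t * \<bar>a\<bar> + (1-t) * \<bar>b\<bar>" using assms(3,4) by (simp add: abs_mult)
  also have "\<dots> \<le> t * d + (1-t) * d"
    using assms by (intro add_mono mult_left_mono) auto
  also have "\<dots> = d" by (simp add: algebra_simps)
  finally show ?thesis .
qed

lemma bal_conv:
  assumes "balance_ok A K B X Bs \<delta> v" "balance_ok A K B X Bs \<delta> w" "0 \<le> t" "t \<le> 1"
  shows "balance_ok A K B X Bs \<delta> (\<lambda>x. t * v x + (1-t) * w x)"
  unfolding balance_ok_def
proof
  fix k assume k: "k \<in> {1..K}"
  let ?a = "(\<Sum>u\<in>A. v u * B k (X u)) - Bs k"
  let ?b = "(\<Sum>u\<in>A. w u * B k (X u)) - Bs k"
  have ha: "\<bar>?a\<bar> \<le> \<delta> k" and hb: "\<bar>?b\<bar> \<le> \<delta> k" using assms(1,2) k by (auto simp: balance_ok_def)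
  have "(\<Sum>u\<in>A. (t * v u + (1-t) * w u) * B k (X u))
      = t * (\<Sum>u\<in>A. v u * B k (X u)) + (1-t) * (\<Sum>u\<in>A. w u * B k (X u))"
  proof -
    have "(\<Sum>u\<in>A. (t * v u + (1-t) * w u) * B k (X u))
      = (\<Sum>u\<in>A. t * (v u * B k (X u)) + (1-t) * (w u * B k (X u)))"
      by (rule sum.cong) (simp_all add: algebra_simps)
    also have "\<dots> = t * (\<Sum>u\<in>A. v u * B k (X u)) + (1-t) * (\<Sum>u\<in>A. w u * B k (X u))"
      by (simp only: sum.distrib sum_distrib_left)
    finally show ?thesis .
  qed
  hence "(\<Sum>u\<in>A. (t * v u + (1-t) * w u) * B k (X u)) - Bs k = t * ?a + (1-t) * ?b"
    by (simp add: algebra_simps)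
  thus "\<bar>(\<Sum>u\<in>A. (t * v u + (1-t) * w u) * B k (X u)) - Bs k\<bar> \<le> \<delta> k"
    using abs_conv_le[OF ha hb assms(3,4)] by simp
qed

lemma bal_restrict:
  assumes "finite S" "R \<subseteq> S" "\<forall>x\<in>S-R. w x = 0"
  shows "balance_ok S K B X Bs \<delta> w = balance_ok R K B X Bs \<delta> w"
proof -
  have "\<And>k. (\<Sum>u\<in>S. w u * B k (X u)) = (\<Sum>u\<in>R. w u * B k (X u))"
    using assms by (intro sum.mono_neutral_right) auto
  thus ?thesis by (simp add: balance_ok_def)
qed


lemma strict_mid_ne:
  fixes \<psi> :: "real \<Rightarrow> real"
  assumes cv: "convex_on UNIV \<psi>" and d: "\<forall>x. \<psi> differentiable (at x)"
    and inj: "inj (deriv \<psi>)" and ab: "a \<noteq> b"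
  shows "\<psi> (1/2 * a + (1 - 1/2) * b) < 1/2 * \<psi> a + (1 - 1/2) * \<psi> b"
proof (cases "a < b")
  case True
  then show ?thesis using strict_mid_lt[OF cv d inj True] by (simp add: field_simps)
next
  case False
  hence "b < a" using ab by simp
  then show ?thesis using strict_mid_lt[OF cv d inj \<open>b < a\<close>] by (simp add: field_simps)
qed



theorem theorem1:
  fixes m :: nat and n :: "nat \<Rightarrow> nat"
    and Z :: "nat \<times> nat \<Rightarrow> nat" and X :: "nat \<times> nat \<Rightarrow> real ^ 'p"
    and K :: nat and B :: "nat \<Rightarrow> real ^ 'p \<Rightarrow> real"
    and Bstar :: "nat \<Rightarrow> real" and \<delta> :: "nat \<Rightarrow> real"
    and \<psi> :: "real \<Rightarrow> real" and z :: nat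
    and wplus :: "nat \<times> nat \<Rightarrow> real"
  defines "U \<equiv> SIGMA i:{1..m}. {1..n i}"
  defines "S \<equiv> {ij \<in> U. Z ij = z}"
  defines "R \<equiv> {ij \<in> S. wplus ij \<noteq> 0}"
  assumes Z_binary: "\<forall>ij\<in>U. Z ij \<in> {0, 1}"
    and K_pos: "K \<ge> 1"
    and B1: "\<forall>x. B 1 x = 1"
    and Bstar1: "Bstar 1 = 1"
    and delta_nonneg: "\<forall>k\<in>{1..K}. \<delta> k \<ge> 0"
    and delta1: "\<delta> 1 = 0"
    and psi_convex: "convex_on UNIV \<psi>"
    and psi_diff: "\<forall>x. \<psi> differentiable (at x)"
    and psi_deriv_inv: "inj (deriv \<psi>)"
    and z01: "z \<in> {0, 1}"
    and wplus_sol: "is_minimizer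
        (\<lambda>w. balance_ok S K B X Bstar \<delta> w \<and> (\<forall>ij\<in>S. w ij \<ge> 0))
        (\<lambda>w. \<Sum>ij\<in>S. \<psi> (w ij)) wplus"
  shows "is_minimizer (balance_ok R K B X Bstar \<delta>) (\<lambda>w. \<Sum>ij\<in>R. \<psi> (w ij)) wplus
         \<and> (\<forall>v. is_minimizer (balance_ok R K B X Bstar \<delta>) (\<lambda>w. \<Sum>ij\<in>R. \<psi> (w ij)) v
               \<longrightarrow> (\<forall>ij\<in>S. (if ij \<in> R then v ij else 0) = wplus ij))"
  proof -
  have finU: "finite U" unfolding U_def by auto
  have SU: "S \<subseteq> U" unfolding S_def by auto
  have finS: "finite S" using finU SU finite_subset by blast
  have RS: "R \<subseteq> S" unfolding R_def by auto
  have finR: "finite R" using finS RS finite_subset by blast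
  have feasS: "balance_ok S K B X Bstar \<delta> wplus" and wnn: "\<forall>ij\<in>S. wplus ij \<ge> 0"
    and optS: "\<And>v. balance_ok S K B X Bstar \<delta> v \<and> (\<forall>ij\<in>S. v ij \<ge> 0) \<Longrightarrow>
        (\<Sum>ij\<in>S. \<psi> (wplus ij)) \<le> (\<Sum>ij\<in>S. \<psi> (v ij))"
    using wplus_sol unfolding is_minimizer_def by auto
  have wpos: "\<forall>ij\<in>R. wplus ij > 0" using wnn unfolding R_def by force
  have wzero: "\<forall>ij\<in>S-R. wplus ij = 0" unfolding R_def by auto
  have feasR: "balance_ok R K B X Bstar \<delta> wplus"
    using feasS bal_restrict[OF finS RS wzero] by blast
  have split: "\<And>f. (\<Sum>ij\<in>S. f ij) = (\<Sum>ij\<in>R. f ij) + (\<Sum>ij\<in>S-R. f ij)"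
    using sum.subset_diff[OF RS finS] by (simp add: add.commute)
  have part1: "\<And>v. balance_ok R K B X Bstar \<delta> v \<Longrightarrow>
      (\<Sum>ij\<in>R. \<psi> (wplus ij)) \<le> (\<Sum>ij\<in>R. \<psi> (v ij))"
  proof (rule ccontr)
    fix v assume fv: "balance_ok R K B X Bstar \<delta> v"
      and nlt: "\<not> (\<Sum>ij\<in>R. \<psi> (wplus ij)) \<le> (\<Sum>ij\<in>R. \<psi> (v ij))"
    hence lt: "(\<Sum>ij\<in>R. \<psi> (v ij)) < (\<Sum>ij\<in>R. \<psi> (wplus ij))" by simp
    define T where "T = insert 1 ((\<lambda>ij. wplus ij / (wplus ij + \<bar>v ij\<bar>)) ` R)"
    define t where "t = Min T"
    have finT: "finite T" using finR unfolding T_def by simp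
    have tpos: "t > 0" unfolding t_def
      using finT wpos by (subst Min_gr_iff) (auto simp: T_def)
    have tle1: "t \<le> 1" unfolding t_def T_def using finT T_def by (intro Min_le) auto
    have tle: "\<And>ij. ij \<in> R \<Longrightarrow> t \<le> wplus ij / (wplus ij + \<bar>v ij\<bar>)"
      unfolding t_def using finT T_def by (intro Min_le) auto
    define c where "c = (\<lambda>x. t * v x + (1-t) * wplus x)"
    define u where "u = (\<lambda>x. if x \<in> R then c x else wplus x)"
    have fc: "balance_ok R K B X Bstar \<delta> c"
      unfolding c_def using bal_conv[OF fv feasR, of t] tpos tle1 by simp
    have fuR: "balance_ok R K B X Bstar \<delta> u"
    proof -
      have "\<And>k. (\<Sum>x\<in>R. u x * B k (X x)) = (\<Sum>x\<in>R. c x * B k (X x))"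
        unfolding u_def by (rule sum.cong) auto
      thus ?thesis using fc by (simp add: balance_ok_def)
    qed
    have fuS: "balance_ok S K B X Bstar \<delta> u"
    proof -
      have "\<forall>x\<in>S-R. u x = 0" using wzero by (simp add: u_def)
      thus ?thesis using fuR bal_restrict[OF finS RS] by blast
    qed
    have unn: "\<forall>ij\<in>S. u ij \<ge> 0"
    proof
      fix ij assume ijS: "ij \<in> S"
      show "u ij \<ge> 0"
      proof (cases "ij \<in> R")
        case True
        have wp: "wplus ij > 0" using wpos True by auto
        have den: "wplus ij + \<bar>v ij\<bar> > 0" using wp by simp
        have "t * (wplus ij + \<bar>v ij\<bar>) \<le> wplus ij"
          using tle[OF True] den by (simp add: le_divide_eq)
        moreover have "t * v ij \<ge> - (t * \<bar>v ij\<bar>)"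
          using mult_left_mono[of "- \<bar>v ij\<bar>" "v ij" t] tpos by simp
        ultimately have "t * v ij + (1-t) * wplus ij \<ge> 0" by (simp add: algebra_simps)
        thus ?thesis using True by (simp add: u_def c_def)
      next
        case False
        thus ?thesis using wnn ijS by (simp add: u_def)
      qed
    qed
    have "(\<Sum>ij\<in>S. \<psi> (wplus ij)) \<le> (\<Sum>ij\<in>S. \<psi> (u ij))" using optS fuS unn by blast
    moreover have "(\<Sum>ij\<in>S-R. \<psi> (u ij)) = (\<Sum>ij\<in>S-R. \<psi> (wplus ij))"
      unfolding u_def by (rule sum.cong) auto
    ultimately have A: "(\<Sum>ij\<in>R. \<psi> (wplus ij)) \<le> (\<Sum>ij\<in>R. \<psi> (u ij))"
      using split[of "\<lambda>ij. \<psi> (wplus ij)"] split[of "\<lambda>ij. \<psi> (u ij)"] by simp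
    have "(\<Sum>ij\<in>R. \<psi> (u ij)) = (\<Sum>ij\<in>R. \<psi> (c ij))"
      unfolding u_def by (rule sum.cong) auto
    also have "\<dots> \<le> (\<Sum>ij\<in>R. t * \<psi> (v ij) + (1-t) * \<psi> (wplus ij))"
    proof (rule sum_mono)
      fix ij assume "ij \<in> R"
      show "\<psi> (c ij) \<le> t * \<psi> (v ij) + (1-t) * \<psi> (wplus ij)"
        using convex_onD[OF psi_convex, of t "wplus ij" "v ij"] tpos tle1
        by (simp add: c_def algebra_simps)
    qed
    also have "\<dots> = t * (\<Sum>ij\<in>R. \<psi> (v ij)) + (1-t) * (\<Sum>ij\<in>R. \<psi> (wplus ij))"
      by (simp add: sum.distrib sum_distrib_left)
    also have "\<dots> < (\<Sum>ij\<in>R. \<psi> (wplus ij))"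
      using lt tpos by (simp add: algebra_simps)
    finally show False using A by simp
  qed
  have min1: "is_minimizer (balance_ok R K B X Bstar \<delta>) (\<lambda>w. \<Sum>ij\<in>R. \<psi> (w ij)) wplus"
    unfolding is_minimizer_def using feasR part1 by blast
  have part2: "\<forall>v. is_minimizer (balance_ok R K B X Bstar \<delta>) (\<lambda>w. \<Sum>ij\<in>R. \<psi> (w ij)) v
               \<longrightarrow> (\<forall>ij\<in>S. (if ij \<in> R then v ij else 0) = wplus ij)"
  proof (intro allI impI ballI)
    fix v ij
    assume mv: "is_minimizer (balance_ok R K B X Bstar \<delta>) (\<lambda>w. \<Sum>ij\<in>R. \<psi> (w ij)) v"
      and ijS: "ij \<in> S"
    have fv: "balance_ok R K B X Bstar \<delta> v"
      and vle: "(\<Sum>ij\<in>R. \<psi> (v ij)) \<le> (\<Sum>ij\<in>R. \<psi> (wplus ij))"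
      and vopt: "\<And>w. balance_ok R K B X Bstar \<delta> w \<Longrightarrow> (\<Sum>ij\<in>R. \<psi> (v ij)) \<le> (\<Sum>ij\<in>R. \<psi> (w ij))"
      using mv feasR unfolding is_minimizer_def by auto
    have eqR: "\<forall>x\<in>R. v x = wplus x"
    proof (rule ccontr)
      assume "\<not> (\<forall>x\<in>R. v x = wplus x)"
      then obtain x where xR: "x \<in> R" and ne: "v x \<noteq> wplus x" by blast
      define c where "c = (\<lambda>x. 1/2 * v x + (1 - 1/2) * wplus x)"
      have fc: "balance_ok R K B X Bstar \<delta> c"
        unfolding c_def by (rule bal_conv[OF fv feasR]) auto
      have "(\<Sum>ij\<in>R. \<psi> (c ij)) < (\<Sum>ij\<in>R. 1/2 * \<psi> (v ij) + (1 - 1/2) * \<psi> (wplus ij))"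
      proof (rule sum_strict_mono_ex1[OF finR])
        show "\<forall>x\<in>R. \<psi> (c x) \<le> 1/2 * \<psi> (v x) + (1 - 1/2) * \<psi> (wplus x)"
        proof
          fix y assume "y \<in> R"
          show "\<psi> (c y) \<le> 1/2 * \<psi> (v y) + (1 - 1/2) * \<psi> (wplus y)"
            using convex_onD[OF psi_convex, of "1/2" "wplus y" "v y"]
            by (simp add: c_def algebra_simps)
        qed
        show "\<exists>x\<in>R. \<psi> (c x) < 1/2 * \<psi> (v x) + (1 - 1/2) * \<psi> (wplus x)"
        proof (rule bexI[OF _ xR])
          show "\<psi> (c x) < 1/2 * \<psi> (v x) + (1 - 1/2) * \<psi> (wplus x)"
            using strict_mid_ne[OF psi_convex psi_diff psi_deriv_inv ne] by (simp only: c_def)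
        qed
      qed
      also have "\<dots> = 1/2 * (\<Sum>ij\<in>R. \<psi> (v ij)) + 1/2 * (\<Sum>ij\<in>R. \<psi> (wplus ij))"
        by (simp add: sum.distrib sum_distrib_left)
      also have "\<dots> \<le> (\<Sum>ij\<in>R. \<psi> (v ij))" using part1[OF fv] by simp
      finally show False using vopt[OF fc] by simp
    qed
    show "(if ij \<in> R then v ij else 0) = wplus ij"
      using eqR wzero ijS by auto
  qed
  show ?thesis by (rule conjI[OF min1 part2])
qed

end
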